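(* Let $f:[0,1]\to\mathbb{R}$ be continuous. The following are equivalent: (1) $f$ is completely non-Hölder; (2) for every non-constant polynomial $P\in\mathbb{R}[t]$, there is no point $x_0\in[0,1]$ at which $P\circ f$ has a one-sided (left or right) derivative equal to $0$; (3) for every function $F$ that is real-analytic and non-constant on an open interval containing $f([0,1])$, the function $F\circ f$ is completely non-Hölder.
   Context: For $\alpha>0$, a function $g:[0,1]\to\mathbb{R}$ is called $\alpha$-Hölder at $x_0$ from the right if $\limsup_{y\searrow x_0}\frac{|g(y)-g(x_0)|}{|y-x_0|^\alpha}<\infty$, and $\alpha$-Hölder at $x_0$ from the left if $\limsup_{y\nearrow x_0}\frac{|g(y)-g(x_0)|}{|y-x_0|^\alpha}<\infty$. The function $g$ is called completely non-Hölder if there is no $x_0\in[0,1]$ and no $\alpha>0$ such that $g$ is $\alpha$-Hölder at $x_0$ from the left or from the right. *)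

theory Defs
  imports "HOL-Analysis.Analysis" "HOL-Computational_Algebra.Polynomial"
begin

definition holder_right :: "(real \<Rightarrow> real) \<Rightarrow> real \<Rightarrow> real \<Rightarrow> bool" where
  "holder_right g \<alpha> x0 \<longleftrightarrow> 0 \<le> x0 \<and> x0 < 1 \<and>
     Limsup (at_right x0) (\<lambda>y. ereal (\<bar>g y - g x0\<bar> / \<bar>y - x0\<bar> powr \<alpha>)) < \<infinity>"

definition holder_left :: "(real \<Rightarrow> real) \<Rightarrow> real \<Rightarrow> real \<Rightarrow> bool" where
  "holder_left g \<alpha> x0 \<longleftrightarrow> 0 < x0 \<and> x0 \<le> 1 \<and>
     Limsup (at_left x0) (\<lambda>y. ereal (\<bar>g y - g x0\<bar> / \<bar>y - x0\<bar> powr \<alpha>)) < \<infinity>"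

definition completely_non_holder :: "(real \<Rightarrow> real) \<Rightarrow> bool" where
  "completely_non_holder g \<longleftrightarrow>
     \<not> (\<exists>x0\<in>{0..1}. \<exists>\<alpha>>0. holder_left g \<alpha> x0 \<or> holder_right g \<alpha> x0)"

definition real_analytic_on :: "(real \<Rightarrow> real) \<Rightarrow> real set \<Rightarrow> bool" where
  "real_analytic_on F S \<longleftrightarrow>
     (\<forall>x\<in>S. \<exists>r>0. \<exists>a::nat \<Rightarrow> real. \<forall>y. \<bar>y - x\<bar> < r \<longrightarrow> (\<lambda>n. a n * (y - x) ^ n) sums F y)"

end

theory Submission
  imports Defs
begin

lemma limsup_iff:
  fixes g :: "real \<Rightarrow> real"
  assumes ev: "eventually (\<lambda>y. y \<noteq> x0) Fl"
  shows "Limsup Fl (\<lambda>y. ereal (\<bar>g y - g x0\<bar> / \<bar>y - x0\<bar> powr \<alpha>)) < \<infinity> \<longleftrightarrow>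
         (\<exists>C. eventually (\<lambda>y. \<bar>g y - g x0\<bar> \<le> C * \<bar>y - x0\<bar> powr \<alpha>) Fl)"
proof
  assume "Limsup Fl (\<lambda>y. ereal (\<bar>g y - g x0\<bar> / \<bar>y - x0\<bar> powr \<alpha>)) < \<infinity>"
  then obtain n :: nat where "Limsup Fl (\<lambda>y. ereal (\<bar>g y - g x0\<bar> / \<bar>y - x0\<bar> powr \<alpha>)) < ereal (real n)"
    using less_PInf_Ex_of_nat by (metis less_irrefl)
  from Limsup_lessD[OF this] have "eventually (\<lambda>y. \<bar>g y - g x0\<bar> / \<bar>y - x0\<bar> powr \<alpha> < real n) Fl"
    by simp
  then have "eventually (\<lambda>y. \<bar>g y - g x0\<bar> \<le> real n * \<bar>y - x0\<bar> powr \<alpha>) Fl"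
    using ev
  proof (eventually_elim)
    case (elim y)
    then have "\<bar>y - x0\<bar> powr \<alpha> > 0" by simp
    with elim show ?case by (simp add: divide_less_eq mult.commute)
  qed
  then show "\<exists>C. eventually (\<lambda>y. \<bar>g y - g x0\<bar> \<le> C * \<bar>y - x0\<bar> powr \<alpha>) Fl" by blast
next
  assume "\<exists>C. eventually (\<lambda>y. \<bar>g y - g x0\<bar> \<le> C * \<bar>y - x0\<bar> powr \<alpha>) Fl"
  then obtain C where C: "eventually (\<lambda>y. \<bar>g y - g x0\<bar> \<le> C * \<bar>y - x0\<bar> powr \<alpha>) Fl" by blast
  have "eventually (\<lambda>y. ereal (\<bar>g y - g x0\<bar> / \<bar>y - x0\<bar> powr \<alpha>) \<le> ereal C) Fl"
    using C ev
  proof (eventually_elim)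
    case (elim y)
    then have "\<bar>y - x0\<bar> powr \<alpha> > 0" by simp
    with elim show ?case by (simp add: divide_le_eq mult.commute)
  qed
  from Limsup_bounded[OF this] show "Limsup Fl (\<lambda>y. ereal (\<bar>g y - g x0\<bar> / \<bar>y - x0\<bar> powr \<alpha>)) < \<infinity>"
    by (rule le_less_trans) simp
qed

lemma holder_transfer:
  fixes f H G :: "real \<Rightarrow> real"
  assumes lim: "(f \<longlongrightarrow> f x0) Fl" and k: "k \<ge> 1" and e: "e > 0"
    and Gc: "isCont G (f x0)" and G0: "G (f x0) \<noteq> 0"
    and fac: "\<forall>t. \<bar>t - f x0\<bar> < e \<longrightarrow> H t - H (f x0) = (t - f x0)^k * G t"
    and hb: "\<exists>C. eventually (\<lambda>y. \<bar>H (f y) - H (f x0)\<bar> \<le> C * \<bar>y - x0\<bar> powr \<alpha>) Fl"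
  shows "\<exists>C. eventually (\<lambda>y. \<bar>f y - f x0\<bar> \<le> C * \<bar>y - x0\<bar> powr (\<alpha> / k)) Fl"
proof -
  define c where "c = f x0"
  define m where "m = \<bar>G c\<bar> / 2"
  have m: "m > 0" using G0 by (simp add: m_def c_def)
  obtain C where C: "eventually (\<lambda>y. \<bar>H (f y) - H c\<bar> \<le> C * \<bar>y - x0\<bar> powr \<alpha>) Fl"
    using hb c_def by blast
  have "((G \<circ> f) \<longlongrightarrow> G c) Fl"
    using Gc lim unfolding c_def by (simp add: isCont_tendsto_compose o_def)
  then have ev1: "eventually (\<lambda>y. dist (G (f y)) (G c) < m) Fl"
    using m by (auto simp: tendsto_iff o_def)
  have ev2: "eventually (\<lambda>y. dist (f y) c < e) Fl"
    using lim e unfolding c_def by (auto simp: tendsto_iff)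
  have "eventually (\<lambda>y. \<bar>f y - c\<bar> \<le> (max C 0 / m) powr (1 / k) * \<bar>y - x0\<bar> powr (\<alpha> / k)) Fl"
    using C ev1 ev2
  proof eventually_elim
    case (elim y)
    have Gy: "\<bar>G (f y)\<bar> \<ge> m"
      using elim(2) unfolding m_def dist_real_def by linarith
    have "H (f y) - H c = (f y - c)^k * G (f y)"
      using fac elim(3) by (simp add: c_def dist_real_def)
    then have "\<bar>f y - c\<bar>^k * m \<le> \<bar>f y - c\<bar>^k * \<bar>G (f y)\<bar>"
      using Gy by (simp add: mult_left_mono)
    also have "\<dots> = \<bar>H (f y) - H c\<bar>"
      using \<open>H (f y) - H c = (f y - c)^k * G (f y)\<close> by (simp add: abs_mult power_abs)
    also have "\<dots> \<le> max C 0 * \<bar>y - x0\<bar> powr \<alpha>"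
      using elim(1) by (meson max.cobounded1 mult_right_mono order_trans powr_ge_zero)
    finally have "\<bar>f y - c\<bar>^k \<le> (max C 0 / m) * \<bar>y - x0\<bar> powr \<alpha>"
      using m by (simp add: field_simps)
    then have "(\<bar>f y - c\<bar>^k) powr (1/k) \<le> ((max C 0 / m) * \<bar>y - x0\<bar> powr \<alpha>) powr (1/k)"
      by (simp add: powr_mono2)
    moreover have "(\<bar>f y - c\<bar>^k) powr (1/k) = \<bar>f y - c\<bar>"
    proof (cases "f y = c")
      case True then show ?thesis using k by simp
    next
      case False then have p: "\<bar>f y - c\<bar> > 0" by simp
      have "(\<bar>f y - c\<bar>^k) powr (1/k) = (\<bar>f y - c\<bar> powr k) powr (1/k)"
        using p by (simp add: powr_realpow)
      also have "\<dots> = \<bar>f y - c\<bar>" using k by (simp add: powr_powr)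
      finally show ?thesis .
    qed
    moreover have "((max C 0 / m) * \<bar>y - x0\<bar> powr \<alpha>) powr (1/k) = (max C 0 / m) powr (1 / k) * \<bar>y - x0\<bar> powr (\<alpha> / k)"
      by (simp only: powr_mult powr_powr) (simp add: field_simps)
    ultimately show ?case by simp
  qed
  then show ?thesis unfolding c_def by blast
qed

lemma deriv_bound:
  fixes g :: "real \<Rightarrow> real"
  assumes "(g has_real_derivative 0) (at x0 within S)"
  shows "\<exists>C. eventually (\<lambda>y. \<bar>g y - g x0\<bar> \<le> C * \<bar>y - x0\<bar> powr 1) (at x0 within S)"
proof -
  have "((\<lambda>y. (g y - g x0) / (y - x0)) \<longlongrightarrow> 0) (at x0 within S)"
    using assms by (simp add: has_field_derivative_iff)
  then have "eventually (\<lambda>y. dist ((g y - g x0) / (y - x0)) 0 < 1) (at x0 within S)"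
    by (auto simp: tendsto_iff)
  moreover have "eventually (\<lambda>y. y \<noteq> x0) (at x0 within S)"
    by (simp add: eventually_at_filter)
  ultimately have "eventually (\<lambda>y. \<bar>g y - g x0\<bar> \<le> 1 * \<bar>y - x0\<bar> powr 1) (at x0 within S)"
  proof eventually_elim
    case (elim y)
    then show ?case by (simp add: abs_divide divide_less_eq)
  qed
  then show ?thesis by blast
qed


lemma powser_factor:
  fixes a :: "nat \<Rightarrow> real"
  assumes r: "r > 0" and S: "\<forall>y. \<bar>y - x\<bar> < r \<longrightarrow> (\<lambda>n. a n * (y - x) ^ n) sums F y"
    and nz: "\<exists>n\<ge>1. a n \<noteq> 0"
  shows "\<exists>k\<ge>1. \<exists>G. isCont G x \<and> G x \<noteq> 0 \<and> (\<forall>y. \<bar>y - x\<bar> < r \<longrightarrow> F y - F x = (y - x)^k * G y)"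
proof -
  define k where "k = (LEAST n. n \<ge> 1 \<and> a n \<noteq> 0)"
  have k: "k \<ge> 1" "a k \<noteq> 0" using LeastI_ex[OF nz] unfolding k_def by auto
  have below: "a i = 0" if "1 \<le> i" "i < k" for i
    using not_less_Least[of i "\<lambda>n. n \<ge> 1 \<and> a n \<noteq> 0"] that unfolding k_def by auto
  define G where "G y = (\<Sum>n. a (n + k) * (y - x) ^ n)" for y
  have Fx: "F x = a 0"
  proof -
    have s1: "(\<lambda>n. a n * (x - x) ^ n) sums F x" by (rule S[rule_format]) (simp add: r)
    have s2: "(\<lambda>n. a n * (x - x) ^ n) sums a 0"
      using powser_sums_zero[of a] by simp
    show ?thesis using sums_unique2[OF s1 s2] .
  qed
  have sumk: "(\<Sum>i<k. a i * h ^ i) = a 0" if "k \<ge> 1" for h :: real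
  proof -
    have "(\<Sum>i<k. a i * h ^ i) = (\<Sum>i\<in>{0}. a i * h ^ i)"
      by (rule sum.mono_neutral_right) (use that below in auto)
    then show ?thesis by simp
  qed
  have shifted: "(\<lambda>n. a (n + k) * (y - x) ^ (n + k)) sums (F y - a 0)" if "\<bar>y - x\<bar> < r" for y
  proof -
    have "(\<lambda>n. a n * (y - x) ^ n) sums F y" using S that by blast
    then have "(\<lambda>n. a n * (y - x) ^ n) sums ((F y - a 0) + (\<Sum>i<k. a i * (y - x) ^ i))"
      using sumk k by simp
    then show ?thesis using sums_iff_shift[of "\<lambda>n. a n * (y - x) ^ n" k] by simp
  qed
  have eq: "F y - F x = (y - x)^k * G y" if "\<bar>y - x\<bar> < r" for y
  proof (cases "y = x")
    case True then show ?thesis using k by simp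
  next
    case False
    have "(\<lambda>n. a (n + k) * (y - x) ^ (n + k) / (y - x) ^ k) sums ((F y - a 0) / (y - x)^k)"
      using sums_divide[OF shifted[OF that]] .
    moreover have "(\<lambda>n. a (n + k) * (y - x) ^ (n + k) / (y - x) ^ k) = (\<lambda>n. a (n + k) * (y - x) ^ n)"
      using False by (simp add: power_add)
    ultimately have "(\<lambda>n. a (n + k) * (y - x) ^ n) sums ((F y - a 0) / (y - x)^k)" by simp
    then have "G y = (F y - a 0) / (y - x)^k" unfolding G_def using sums_unique by metis
    then show ?thesis using False Fx by simp
  qed
  have summ: "summable (\<lambda>n. a (n + k) * (r/2) ^ n)"
  proof -
    have "(\<lambda>n. a (n + k) * ((x + r/2) - x) ^ (n + k)) sums (F (x + r/2) - a 0)"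
      using shifted[of "x + r/2"] r by simp
    then have "(\<lambda>n. a (n + k) * (r/2) ^ (n + k) / (r/2)^k) sums ((F (x + r/2) - a 0) / (r/2)^k)"
      using sums_divide by fastforce
    moreover have "(\<lambda>n. a (n + k) * (r/2) ^ (n + k) / (r/2)^k) = (\<lambda>n. a (n + k) * (r/2) ^ n)"
      using r by (simp add: power_add)
    ultimately show ?thesis by (metis sums_summable)
  qed
  have "isCont (\<lambda>z. \<Sum>n. a (n + k) * z ^ n) (x - x)"
    by (rule isCont_powser[OF summ]) (use r in simp)
  then have cont: "isCont G x"
    unfolding G_def by (intro continuous_intros isCont_o2[where f="\<lambda>y. y - x"]) (auto intro!: continuous_intros)
  have "G x = a k" unfolding G_def by simp
  then show ?thesis using k cont eq by metis
qed


lemma local_dichotomy: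
  assumes "real_analytic_on F I" "x \<in> I"
  shows "(\<exists>e>0. \<forall>y. \<bar>y - x\<bar> < e \<longrightarrow> F y = F x) \<or>
         (\<exists>k\<ge>1. \<exists>G e. e > 0 \<and> isCont G x \<and> G x \<noteq> 0 \<and> (\<forall>y. \<bar>y - x\<bar> < e \<longrightarrow> F y - F x = (y - x)^k * G y))"
proof -
  obtain r a where r: "r > 0" and S: "\<forall>y. \<bar>y - x\<bar> < r \<longrightarrow> (\<lambda>n. a n * (y - x) ^ n) sums F y"
    using assms unfolding real_analytic_on_def by blast
  show ?thesis
  proof (cases "\<exists>n\<ge>1. a n \<noteq> 0")
    case True
    from powser_factor[OF r S True] obtain k G where
      kG: "k \<ge> 1" "isCont G x" "G x \<noteq> 0" "\<forall>y. \<bar>y - x\<bar> < r \<longrightarrow> F y - F x = (y - x)^k * G y"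
      by blast
    have "\<exists>G e. e > 0 \<and> isCont G x \<and> G x \<noteq> 0 \<and> (\<forall>y. \<bar>y - x\<bar> < e \<longrightarrow> F y - F x = (y - x)^k * G y)"
      using kG r by blast
    then show ?thesis using kG(1) by blast
  next
    case False
    have c: "F y = a 0" if "\<bar>y - x\<bar> < r" for y
    proof -
      have "(\<lambda>n. a n * (y - x) ^ n) = (\<lambda>n. if n = 0 then a n * (y - x) ^ n else 0)"
        using False by (auto simp: fun_eq_iff)
      then have "(\<lambda>n. a n * (y - x) ^ n) sums (a 0 * (y - x) ^ 0)"
        using sums_single[of 0 "\<lambda>n. a n * (y - x) ^ n"] by simp
      moreover have "(\<lambda>n. a n * (y - x) ^ n) sums F y" using S that by blast
      ultimately show ?thesis using sums_unique2 by (metis mult.right_neutral power_0)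
    qed
    have "\<forall>y. \<bar>y - x\<bar> < r \<longrightarrow> F y = F x" using c r by simp
    then show ?thesis using r by blast
  qed
qed

lemma analytic_props:
  assumes "real_analytic_on F I" "x \<in> I"
  shows "isCont F x"
    and "(\<exists>e>0. \<forall>y. \<bar>y - x\<bar> < e \<longrightarrow> F y = F x) \<or> (\<exists>d>0. \<forall>y. 0 < \<bar>y - x\<bar> \<and> \<bar>y - x\<bar> < d \<longrightarrow> F y \<noteq> F x)"
proof -
  have "isCont F x \<and> ((\<exists>e>0. \<forall>y. \<bar>y - x\<bar> < e \<longrightarrow> F y = F x) \<or> (\<exists>d>0. \<forall>y. 0 < \<bar>y - x\<bar> \<and> \<bar>y - x\<bar> < d \<longrightarrow> F y \<noteq> F x))"
    using local_dichotomy[OF assms]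
  proof
    assume "\<exists>e>0. \<forall>y. \<bar>y - x\<bar> < e \<longrightarrow> F y = F x"
    then obtain e where e: "e > 0" "\<forall>y. \<bar>y - x\<bar> < e \<longrightarrow> F y = F x" by blast
    have "\<forall>y. dist y x < e \<longrightarrow> F y = F x" using e(2) unfolding dist_real_def by blast
    then have "eventually (\<lambda>y. F y = F x) (nhds x)"
      unfolding eventually_nhds_metric using e(1) by blast
    then have "isCont F x" using isCont_cong[of F "\<lambda>_. F x"] by simp
    then show ?thesis using e by blast
  next
    assume "\<exists>k\<ge>1. \<exists>G e. e > 0 \<and> isCont G x \<and> G x \<noteq> 0 \<and> (\<forall>y. \<bar>y - x\<bar> < e \<longrightarrow> F y - F x = (y - x)^k * G y)"
    then obtain k G e where k: "k \<ge> 1" and e: "e > 0" and G: "isCont G x" "G x \<noteq> 0"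
      and eq: "\<forall>y. \<bar>y - x\<bar> < e \<longrightarrow> F y - F x = (y - x)^k * G y" by blast
    have "\<forall>y. dist y x < e \<longrightarrow> F y = F x + (y - x)^k * G y"
    proof (intro allI impI)
      fix y assume "dist y x < e"
      then have "\<bar>y - x\<bar> < e" by (simp add: dist_real_def)
      then have "F y - F x = (y - x)^k * G y" using eq by blast
      then show "F y = F x + (y - x)^k * G y" by simp
    qed
    then have ev: "eventually (\<lambda>y. F y = F x + (y - x)^k * G y) (nhds x)"
      unfolding eventually_nhds_metric using e by blast
    moreover have "isCont (\<lambda>y. F x + (y - x)^k * G y) x"
      using G by (intro continuous_intros) auto
    ultimately have c: "isCont F x" using isCont_cong[OF ev] by simp
    obtain d where d: "d > 0" "\<forall>y. dist x y < d \<longrightarrow> G y \<noteq> 0"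
      using continuous_at_avoid[OF G] by blast
    have "\<forall>y. 0 < \<bar>y - x\<bar> \<and> \<bar>y - x\<bar> < min d e \<longrightarrow> F y \<noteq> F x"
    proof (intro allI impI)
      fix y assume y: "0 < \<bar>y - x\<bar> \<and> \<bar>y - x\<bar> < min d e"
      then have "dist x y < d" by (simp add: dist_real_def abs_minus_commute)
      then have "G y \<noteq> 0" using d by blast
      moreover have "(y - x)^k \<noteq> 0" using y by simp
      moreover have "F y - F x = (y - x)^k * G y" using eq y by simp
      ultimately have "F y - F x \<noteq> 0" by simp
      then show "F y \<noteq> F x" by simp
    qed
    moreover have "min d e > 0" using d e by simp
    ultimately show ?thesis using c by blast
  qed
  then show "isCont F x" "(\<exists>e>0. \<forall>y. \<bar>y - x\<bar> < e \<longrightarrow> F y = F x) \<or> (\<exists>d>0. \<forall>y. 0 < \<bar>y - x\<bar> \<and> \<bar>y - x\<bar> < d \<longrightarrow> F y \<noteq> F x)"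
    by blast+
qed

lemma identity_thm:
  assumes I: "open I" "is_interval I" and an: "real_analytic_on F I" and c0: "c0 \<in> I"
    and loc: "\<exists>e>0. \<forall>y. \<bar>y - c0\<bar> < e \<longrightarrow> F y = F c0"
  shows "\<forall>y\<in>I. F y = F c0"
proof -
  define v where "v = F c0"
  define Z where "Z = {x. \<exists>e>0. \<forall>y. \<bar>y - x\<bar> < e \<longrightarrow> F y = v}"
  define V where "V = {x. \<exists>e>0. ball x e \<subseteq> I \<and> ball x e \<inter> Z = {}}"
  have Zv: "F z = v" if "z \<in> Z" for z using that unfolding Z_def by force
  have oZ: "open Z"
    unfolding open_dist
  proof
    fix x assume "x \<in> Z"
    then obtain e where e: "e > 0" "\<forall>y. \<bar>y - x\<bar> < e \<longrightarrow> F y = v" unfolding Z_def by blast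
    have "\<forall>y. dist y x < e/2 \<longrightarrow> y \<in> Z"
    proof (intro allI impI)
      fix y assume "dist y x < e/2"
      then have "\<forall>z. \<bar>z - y\<bar> < e/2 \<longrightarrow> F z = v"
      proof (intro allI impI)
        fix z assume "dist y x < e/2" "\<bar>z - y\<bar> < e/2"
        then have "\<bar>z - x\<bar> < e" unfolding dist_real_def by linarith
        then show "F z = v" using e(2) by blast
      qed
      then show "y \<in> Z" unfolding Z_def using e by (auto intro!: exI[of _ "e/2"])
    qed
    then show "\<exists>e>0. \<forall>y. dist y x < e \<longrightarrow> y \<in> Z" using e by (auto intro!: exI[of _ "e/2"])
  qed
  have oV: "open V"
    unfolding open_contains_ball
  proof
    fix x assume "x \<in> V"
    then obtain e where e: "e > 0" "ball x e \<subseteq> I" "ball x e \<inter> Z = {}" unfolding V_def by blast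
    have "ball x (e/2) \<subseteq> V"
    proof
      fix y assume "y \<in> ball x (e/2)"
      then have "ball y (e/2) \<subseteq> ball x e" by (auto simp: dist_real_def ball_def abs_if split: if_splits)
      then show "y \<in> V" unfolding V_def using e by (auto intro!: exI[of _ "e/2"])
    qed
    then show "\<exists>e>0. ball x e \<subseteq> V" using e by (auto intro!: exI[of _ "e/2"])
  qed
  have disj: "Z \<inter> V \<inter> I = {}"
    unfolding V_def by (auto dest: centre_in_ball[THEN iffD2])
  have cover: "I \<subseteq> Z \<union> V"
  proof
    fix x assume xI: "x \<in> I"
    show "x \<in> Z \<union> V"
    proof (cases "x \<in> Z")
      case True then show ?thesis by simp
    next
      case False
      obtain eI where eI: "eI > 0" "ball x eI \<subseteq> I" using I(1) xI open_contains_ball by blast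
      have "x \<in> V"
      proof (cases "F x = v")
        case False
        have "isCont F x" using analytic_props(1)[OF an xI] .
        then obtain d where d: "d > 0" "\<forall>y. dist x y < d \<longrightarrow> F y \<noteq> v"
          using continuous_at_avoid[of x F v] False by blast
        have "ball x (min d eI) \<inter> Z = {}"
        proof (rule ccontr)
          assume "ball x (min d eI) \<inter> Z \<noteq> {}"
          then obtain z where z: "z \<in> ball x (min d eI)" "z \<in> Z" by blast
          then have "dist x z < d" by simp
          then have "F z \<noteq> v" using d(2) by blast
          then show False using Zv[OF z(2)] by simp
        qed
        moreover have "ball x (min d eI) \<subseteq> I" using eI by auto
        ultimately show ?thesis unfolding V_def using d eI by (auto intro!: exI[of _ "min d eI"])
      next
        case True
        from analytic_props(2)[OF an xI] show ?thesis
        proof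
          assume "\<exists>e>0. \<forall>y. \<bar>y - x\<bar> < e \<longrightarrow> F y = F x"
          then have "x \<in> Z" using True unfolding Z_def by auto
          then show ?thesis using \<open>x \<notin> Z\<close> by simp
        next
          assume "\<exists>d>0. \<forall>y. 0 < \<bar>y - x\<bar> \<and> \<bar>y - x\<bar> < d \<longrightarrow> F y \<noteq> F x"
          then obtain d where d: "d > 0" "\<forall>y. 0 < \<bar>y - x\<bar> \<and> \<bar>y - x\<bar> < d \<longrightarrow> F y \<noteq> F x" by blast
          have "ball x (min d eI) \<inter> Z = {}"
          proof (rule ccontr)
            assume "ball x (min d eI) \<inter> Z \<noteq> {}"
            then obtain z where z: "z \<in> ball x (min d eI)" "z \<in> Z" by blast
            have "z \<noteq> x" using z \<open>x \<notin> Z\<close> by auto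
            then have "F z \<noteq> F x" using d z by (auto simp: dist_real_def)
            then show False using Zv[OF z(2)] True by simp
          qed
          moreover have "ball x (min d eI) \<subseteq> I" using eI by auto
          ultimately show ?thesis unfolding V_def using d eI by (auto intro!: exI[of _ "min d eI"])
        qed
      qed
      then show ?thesis by simp
    qed
  qed
  have conn: "connected I" using I(2) is_interval_connected by blast
  have "c0 \<in> Z" using loc unfolding Z_def v_def by blast
  then have "Z \<inter> I \<noteq> {}" using c0 by blast
  then have "V \<inter> I = {}" using connectedD[OF conn oZ oV disj cover] by blast
  then have "I \<subseteq> Z" using cover by blast
  then show ?thesis using Zv unfolding v_def by blast
qed


lemma cont_right:
  assumes "continuous_on {0..1} f" "0 \<le> x0" "x0 < (1::real)"
  shows "(f \<longlongrightarrow> f x0) (at_right x0)"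
proof -
  have "(f \<longlongrightarrow> f x0) (at x0 within {0..1})"
    using assms by (simp add: continuous_on_def)
  then have "(f \<longlongrightarrow> f x0) (at x0 within {x0..1})"
    by (rule tendsto_within_subset) (use assms in auto)
  then show ?thesis using at_within_Icc_at_right[OF assms(3)] by simp
qed

lemma cont_left:
  assumes "continuous_on {0..1} f" "0 < x0" "x0 \<le> (1::real)"
  shows "(f \<longlongrightarrow> f x0) (at_left x0)"
proof -
  have "(f \<longlongrightarrow> f x0) (at x0 within {0..1})"
    using assms by (simp add: continuous_on_def)
  then have "(f \<longlongrightarrow> f x0) (at x0 within {0..x0})"
    by (rule tendsto_within_subset) (use assms in auto)
  then show ?thesis using at_within_Icc_at_left[OF assms(2)] by simp
qed

lemma ev_ne: "eventually (\<lambda>y. y \<noteq> x0) (at x0 within S)"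
  by (simp add: eventually_at_filter)

lemma transfer_right:
  fixes f H G :: "real \<Rightarrow> real"
  assumes "continuous_on {0..1} f" "0 \<le> x0" "x0 < 1" "k \<ge> 1" "e > 0"
    "isCont G (f x0)" "G (f x0) \<noteq> 0"
    "\<forall>t. \<bar>t - f x0\<bar> < e \<longrightarrow> H t - H (f x0) = (t - f x0)^k * G t"
    "\<exists>C. eventually (\<lambda>y. \<bar>H (f y) - H (f x0)\<bar> \<le> C * \<bar>y - x0\<bar> powr \<alpha>) (at_right x0)"
  shows "holder_right f (\<alpha> / k) x0"
  using holder_transfer[OF cont_right[OF assms(1-3)] assms(4-9)] assms(2,3)
  unfolding holder_right_def limsup_iff[OF ev_ne] by blast

lemma transfer_left:
  fixes f H G :: "real \<Rightarrow> real"
  assumes "continuous_on {0..1} f" "0 < x0" "x0 \<le> 1" "k \<ge> 1" "e > 0"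
    "isCont G (f x0)" "G (f x0) \<noteq> 0"
    "\<forall>t. \<bar>t - f x0\<bar> < e \<longrightarrow> H t - H (f x0) = (t - f x0)^k * G t"
    "\<exists>C. eventually (\<lambda>y. \<bar>H (f y) - H (f x0)\<bar> \<le> C * \<bar>y - x0\<bar> powr \<alpha>) (at_left x0)"
  shows "holder_left f (\<alpha> / k) x0"
  using holder_transfer[OF cont_left[OF assms(1-3)] assms(4-9)] assms(2,3)
  unfolding holder_left_def limsup_iff[OF ev_ne] by blast

lemma deriv_from_bound:
  fixes f :: "real \<Rightarrow> real"
  assumes B: "eventually (\<lambda>y. \<bar>f y - f x0\<bar> \<le> C * \<bar>y - x0\<bar> powr \<alpha>) (at x0 within S)"
    and ka: "real k * \<alpha> > 1"
  shows "((\<lambda>y. (f y - f x0)^k) has_real_derivative 0) (at x0 within S)"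
proof -
  have k: "k \<ge> 1" using ka by (cases k) auto
  have "eventually (\<lambda>y. norm (((f y - f x0)^k - (f x0 - f x0)^k) / (y - x0))
          \<le> \<bar>C\<bar>^k * \<bar>y - x0\<bar> powr (real k * \<alpha> - 1)) (at x0 within S)"
    using B ev_ne
  proof eventually_elim
    case (elim y)
    have p: "\<bar>y - x0\<bar> > 0" using elim by simp
    have "\<bar>f y - f x0\<bar> \<le> \<bar>C\<bar> * \<bar>y - x0\<bar> powr \<alpha>"
      using elim(1) by (meson abs_ge_self mult_right_mono order_trans powr_ge_zero)
    then have "\<bar>f y - f x0\<bar>^k \<le> (\<bar>C\<bar> * \<bar>y - x0\<bar> powr \<alpha>)^k"
      by (simp add: power_mono)
    also have "\<dots> = \<bar>C\<bar>^k * \<bar>y - x0\<bar> powr (real k * \<alpha>)"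
      using p by (simp add: power_mult_distrib powr_realpow[symmetric] powr_powr mult.commute)
    finally have *: "\<bar>f y - f x0\<bar>^k \<le> \<bar>C\<bar>^k * \<bar>y - x0\<bar> powr (real k * \<alpha>)" .
    have "norm (((f y - f x0)^k - (f x0 - f x0)^k) / (y - x0)) = \<bar>f y - f x0\<bar>^k / \<bar>y - x0\<bar>"
      using k by (simp add: abs_divide power_abs zero_power)
    also have "\<dots> \<le> \<bar>C\<bar>^k * \<bar>y - x0\<bar> powr (real k * \<alpha>) / \<bar>y - x0\<bar>"
      using * p by (simp add: divide_right_mono)
    also have "\<dots> = \<bar>C\<bar>^k * \<bar>y - x0\<bar> powr (real k * \<alpha> - 1)"
      using p by (simp add: powr_diff)
    finally show ?case .
  qed
  moreover have "((\<lambda>y. \<bar>C\<bar>^k * \<bar>y - x0\<bar> powr (real k * \<alpha> - 1)) \<longlongrightarrow> 0) (at x0 within S)"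
  proof -
    have "((\<lambda>y. \<bar>y - x0\<bar>) \<longlongrightarrow> 0) (at x0 within S)"
      by (intro tendsto_eq_intros) auto
    then have "((\<lambda>y. \<bar>y - x0\<bar> powr (real k * \<alpha> - 1)) \<longlongrightarrow> 0) (at x0 within S)"
      using ka by (intro tendsto_zero_powrI) auto
    then show ?thesis by (simp add: tendsto_mult_right_zero)
  qed
  ultimately have "((\<lambda>y. ((f y - f x0)^k - (f x0 - f x0)^k) / (y - x0)) \<longlongrightarrow> 0) (at x0 within S)"
    by (rule Lim_null_comparison)
  then show ?thesis by (simp add: has_field_derivative_iff)
qed


lemma poly_factor:
  fixes P :: "real poly"
  assumes "degree P > 0"
  shows "\<exists>k\<ge>1. \<exists>q. poly q c \<noteq> 0 \<and> (\<forall>t. poly P t - poly P c = (t - c)^k * poly q t)"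
proof -
  define Q where "Q = P - [:poly P c:]"
  have Q0: "Q \<noteq> 0"
  proof
    assume "Q = 0"
    then have "P = [:poly P c:]" unfolding Q_def by simp
    then have "degree P = 0" by (metis degree_pCons_0)
    then show False using assms by simp
  qed
  have rootQ: "poly Q c = 0" unfolding Q_def by simp
  obtain q where q: "Q = [:- c, 1:] ^ order c Q * q" "\<not> [:- c, 1:] dvd q"
    using order_decomp[OF Q0] by blast
  have k: "order c Q \<ge> 1" using rootQ Q0 order_root by (metis less_one not_le)
  have "poly q c \<noteq> 0" using q(2) poly_eq_0_iff_dvd by blast
  moreover have "\<forall>t. poly P t - poly P c = (t - c)^(order c Q) * poly q t"
  proof
    fix t
    have "poly P t - poly P c = poly Q t" unfolding Q_def by simp
    also have "\<dots> = (t - c)^(order c Q) * poly q t"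
      by (subst q(1)) (simp add: poly_power)
    finally show "poly P t - poly P c = (t - c)^(order c Q) * poly q t" .
  qed
  ultimately show ?thesis using k by blast
qed

lemma id_analytic: "real_analytic_on (\<lambda>x. x) UNIV"
  unfolding real_analytic_on_def
proof
  fix x :: real
  define a where "a n = (if n = 0 then x else if n = 1 then 1 else 0)" for n :: nat
  have "\<forall>y. \<bar>y - x\<bar> < 1 \<longrightarrow> (\<lambda>n. a n * (y - x) ^ n) sums y"
  proof (intro allI impI)
    fix y :: real
    have "(\<lambda>n. a n * (y - x) ^ n) sums (\<Sum>n\<in>{0,1}. a n * (y - x) ^ n)"
      by (rule sums_finite) (auto simp: a_def)
    then show "(\<lambda>n. a n * (y - x) ^ n) sums y" by (simp add: a_def)
  qed
  then show "\<exists>r>0. \<exists>a. \<forall>y. \<bar>y - x\<bar> < r \<longrightarrow> (\<lambda>n. a n * (y - x) ^ n) sums y"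
    by (intro exI[of _ 1]) auto
qed


theorem mainTheorem1:
  fixes f :: "real \<Rightarrow> real"
  assumes "continuous_on {0..1} f"
  shows "(completely_non_holder f
          \<longleftrightarrow> (\<forall>P :: real poly. degree P > 0 \<longrightarrow>
                 \<not> (\<exists>x0\<in>{0..1}.
                      (x0 < 1 \<and> ((\<lambda>x. poly P (f x)) has_real_derivative 0) (at_right x0)) \<or>
                      (0 < x0 \<and> ((\<lambda>x. poly P (f x)) has_real_derivative 0) (at_left x0)))))
       \<and> (completely_non_holder f
          \<longleftrightarrow> (\<forall>F :: real \<Rightarrow> real.
                 (\<exists>I. open I \<and> is_interval I \<and> f ` {0..1} \<subseteq> I \<and> real_analytic_on F I \<and>
                      (\<exists>x\<in>I. \<exists>y\<in>I. F x \<noteq> F y))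
                 \<longrightarrow> completely_non_holder (\<lambda>x. F (f x))))"
proof -
  note cf = assms
  have P1: "\<not> (\<exists>x0\<in>{0..1}.
                      (x0 < 1 \<and> ((\<lambda>x. poly P (f x)) has_real_derivative 0) (at_right x0)) \<or>
                      (0 < x0 \<and> ((\<lambda>x. poly P (f x)) has_real_derivative 0) (at_left x0)))"
    if cnh: "completely_non_holder f" and deg: "degree P > 0" for P :: "real poly"
  proof
    assume "\<exists>x0\<in>{0..1}.
                      (x0 < 1 \<and> ((\<lambda>x. poly P (f x)) has_real_derivative 0) (at_right x0)) \<or>
                      (0 < x0 \<and> ((\<lambda>x. poly P (f x)) has_real_derivative 0) (at_left x0))"
    then obtain x0 where x0: "x0 \<in> {0..1}" and D:
      "(x0 < 1 \<and> ((\<lambda>x. poly P (f x)) has_real_derivative 0) (at_right x0)) \<or>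
       (0 < x0 \<and> ((\<lambda>x. poly P (f x)) has_real_derivative 0) (at_left x0))" by blast
    obtain k q where k: "k \<ge> 1" and q: "poly q (f x0) \<noteq> 0"
      and fac: "\<forall>t. poly P t - poly P (f x0) = (t - f x0)^k * poly q t"
      using poly_factor[OF deg, of "f x0"] by blast
    have fac': "\<forall>t. \<bar>t - f x0\<bar> < 1 \<longrightarrow> poly P t - poly P (f x0) = (t - f x0)^k * poly q t"
      using fac by blast
    have qc: "isCont (poly q) (f x0)" by (rule poly_isCont)
    have pos: "1 / real k > 0" using k by simp
    from D show False
    proof
      assume r: "x0 < 1 \<and> ((\<lambda>x. poly P (f x)) has_real_derivative 0) (at_right x0)"
      have "holder_right f (1 / k) x0"
        using transfer_right[OF cf _ _ k _ qc q fac' deriv_bound[OF r[THEN conjunct2]]] x0 r by simp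
      then show False using cnh x0 pos unfolding completely_non_holder_def by blast
    next
      assume l: "0 < x0 \<and> ((\<lambda>x. poly P (f x)) has_real_derivative 0) (at_left x0)"
      have "holder_left f (1 / k) x0"
        using transfer_left[OF cf _ _ k _ qc q fac' deriv_bound[OF l[THEN conjunct2]]] x0 l by simp
      then show False using cnh x0 pos unfolding completely_non_holder_def by blast
    qed
  qed
  have P2: "completely_non_holder f"
    if H: "\<forall>P :: real poly. degree P > 0 \<longrightarrow>
                 \<not> (\<exists>x0\<in>{0..1}.
                      (x0 < 1 \<and> ((\<lambda>x. poly P (f x)) has_real_derivative 0) (at_right x0)) \<or>
                      (0 < x0 \<and> ((\<lambda>x. poly P (f x)) has_real_derivative 0) (at_left x0)))"
    unfolding completely_non_holder_def
  proof
    assume "\<exists>x0\<in>{0..1}. \<exists>\<alpha>>0. holder_left f \<alpha> x0 \<or> holder_right f \<alpha> x0"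
    then obtain x0 \<alpha> where x0: "x0 \<in> {0..1}" and a: "\<alpha> > 0"
      and h: "holder_left f \<alpha> x0 \<or> holder_right f \<alpha> x0" by blast
    obtain k :: nat where kk: "1 / \<alpha> < real k" using reals_Archimedean2 by blast
    have ka: "real k * \<alpha> > 1" using kk a by (simp add: divide_less_eq mult.commute)
    have k: "k \<ge> 1" using ka by (cases k) auto
    define P where "P = [:- f x0, 1:] ^ k"
    have deg: "degree P > 0" unfolding P_def using k degree_linear_power[of "- f x0" k] by simp
    have pe: "(\<lambda>x. poly P (f x)) = (\<lambda>y. (f y - f x0)^k)"
      unfolding P_def by (simp add: poly_power fun_eq_iff)
    have "(x0 < 1 \<and> ((\<lambda>x. poly P (f x)) has_real_derivative 0) (at_right x0)) \<or>
          (0 < x0 \<and> ((\<lambda>x. poly P (f x)) has_real_derivative 0) (at_left x0))"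
      using h
    proof
      assume "holder_left f \<alpha> x0"
      then have "0 < x0" and "\<exists>C. eventually (\<lambda>y. \<bar>f y - f x0\<bar> \<le> C * \<bar>y - x0\<bar> powr \<alpha>) (at_left x0)"
        unfolding holder_left_def limsup_iff[OF ev_ne] by blast+
      then show ?thesis using deriv_from_bound[OF _ ka] unfolding pe by blast
    next
      assume "holder_right f \<alpha> x0"
      then have "x0 < 1" and "\<exists>C. eventually (\<lambda>y. \<bar>f y - f x0\<bar> \<le> C * \<bar>y - x0\<bar> powr \<alpha>) (at_right x0)"
        unfolding holder_right_def limsup_iff[OF ev_ne] by blast+
      then show ?thesis using deriv_from_bound[OF _ ka] unfolding pe by blast
    qed
    then show False using H deg x0 by blast
  qed
  have P3: "completely_non_holder (\<lambda>x. F (f x))"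
    if cnh: "completely_non_holder f"
      and FI: "\<exists>I. open I \<and> is_interval I \<and> f ` {0..1} \<subseteq> I \<and> real_analytic_on F I \<and>
                      (\<exists>x\<in>I. \<exists>y\<in>I. F x \<noteq> F y)" for F
    unfolding completely_non_holder_def
  proof
    obtain I where I: "open I" "is_interval I" "f ` {0..1} \<subseteq> I" "real_analytic_on F I"
      and nc: "\<exists>x\<in>I. \<exists>y\<in>I. F x \<noteq> F y" using FI by blast
    assume "\<exists>x0\<in>{0..1}. \<exists>\<alpha>>0. holder_left (\<lambda>x. F (f x)) \<alpha> x0 \<or> holder_right (\<lambda>x. F (f x)) \<alpha> x0"
    then obtain x0 \<alpha> where x0: "x0 \<in> {0..1}" and a: "\<alpha> > 0"
      and h: "holder_left (\<lambda>x. F (f x)) \<alpha> x0 \<or> holder_right (\<lambda>x. F (f x)) \<alpha> x0" by blast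
    have cI: "f x0 \<in> I" using I(3) x0 by blast
    from local_dichotomy[OF I(4) cI] show False
    proof
      assume "\<exists>e>0. \<forall>y. \<bar>y - f x0\<bar> < e \<longrightarrow> F y = F (f x0)"
      from identity_thm[OF I(1,2,4) cI this] nc show False by metis
    next
      assume "\<exists>k\<ge>1. \<exists>G e. e > 0 \<and> isCont G (f x0) \<and> G (f x0) \<noteq> 0 \<and>
                (\<forall>y. \<bar>y - f x0\<bar> < e \<longrightarrow> F y - F (f x0) = (y - f x0)^k * G y)"
      then obtain k G e where k: "k \<ge> 1" and e: "e > 0" and G: "isCont G (f x0)" "G (f x0) \<noteq> 0"
        and fac: "\<forall>y. \<bar>y - f x0\<bar> < e \<longrightarrow> F y - F (f x0) = (y - f x0)^k * G y" by blast
      have pos: "\<alpha> / real k > 0" using k a by simp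
      from h show False
      proof
        assume "holder_left (\<lambda>x. F (f x)) \<alpha> x0"
        then have "0 < x0" and L: "Limsup (at_left x0) (\<lambda>y. ereal (\<bar>F (f y) - F (f x0)\<bar> / \<bar>y - x0\<bar> powr \<alpha>)) < \<infinity>"
          unfolding holder_left_def by blast+
        have b: "\<exists>C. eventually (\<lambda>y. \<bar>F (f y) - F (f x0)\<bar> \<le> C * \<bar>y - x0\<bar> powr \<alpha>) (at_left x0)"
          using L limsup_iff[OF ev_ne, where g="\<lambda>x. F (f x)"] by blast
        have "holder_left f (\<alpha> / k) x0"
          using transfer_left[OF cf \<open>0 < x0\<close> _ k e G fac b] x0 by simp
        then show False using cnh x0 pos unfolding completely_non_holder_def by blast
      next
        assume "holder_right (\<lambda>x. F (f x)) \<alpha> x0"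
        then have "x0 < 1" and L: "Limsup (at_right x0) (\<lambda>y. ereal (\<bar>F (f y) - F (f x0)\<bar> / \<bar>y - x0\<bar> powr \<alpha>)) < \<infinity>"
          unfolding holder_right_def by blast+
        have b: "\<exists>C. eventually (\<lambda>y. \<bar>F (f y) - F (f x0)\<bar> \<le> C * \<bar>y - x0\<bar> powr \<alpha>) (at_right x0)"
          using L limsup_iff[OF ev_ne, where g="\<lambda>x. F (f x)"] by blast
        have "holder_right f (\<alpha> / k) x0"
          using transfer_right[OF cf _ \<open>x0 < 1\<close> k e G fac b] x0 by simp
        then show False using cnh x0 pos unfolding completely_non_holder_def by blast
      qed
    qed
  qed
  have P4: "completely_non_holder f"
    if H: "\<forall>F :: real \<Rightarrow> real.
                 (\<exists>I. open I \<and> is_interval I \<and> f ` {0..1} \<subseteq> I \<and> real_analytic_on F I \<and>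
                      (\<exists>x\<in>I. \<exists>y\<in>I. F x \<noteq> F y))
                 \<longrightarrow> completely_non_holder (\<lambda>x. F (f x))"
  proof -
    have "\<exists>I. open I \<and> is_interval I \<and> f ` {0..1} \<subseteq> I \<and> real_analytic_on (\<lambda>x. x) I \<and>
                      (\<exists>x\<in>I. \<exists>y\<in>I. x \<noteq> (y::real))"
      by (rule exI[of _ UNIV]) (auto simp: id_analytic is_interval_univ intro!: bexI[of _ 0] bexI[of _ 1])
    then show ?thesis using H[rule_format, of "\<lambda>x. x"] by simp
  qed
  show ?thesis
    apply (intro conjI iffI allI impI)
       apply (erule P1, assumption)
      apply (erule P2)
     apply (erule P3, assumption)
    apply (erule P4)
    done
qed

end
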